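(* Assume $e_{-1}+e_{+1}<1$ and $\delta_{\tilde p}\neq 0$, and let $\alpha=1-(1-e_{-1}-e_{+1})\cdot\frac{\delta_p}{\delta_{\tilde p}}$. Then there is a constant $c>0$ such that for any measurable classifiers $f,f':\mathcal X\to\{-1,+1\}$, $$\mathbb E_{\tilde{\mathcal D}}[\mathbb 1_{\alpha\text{-peer}}(f(X),\tilde Y)]-\mathbb E_{\tilde{\mathcal D}}[\mathbb 1_{\alpha\text{-peer}}(f'(X),\tilde Y)]=c\,(1-e_{-1}-e_{+1})\bigl(\mathbb E_{\mathcal D}[\mathbb 1(f(X),Y)]-\mathbb E_{\mathcal D}[\mathbb 1(f'(X),Y)]\bigr).$$
   Context: Let $\mathcal X\subseteq\mathbb R^d$ and let $(X,Y)$ be a random pair with distribution $\mathcal D$ on $\mathcal X\times\{-1,+1\}$, with $p:=\mathbb P(Y=+1)\in(0,1)$. A noisy label $\tilde Y\in\{-1,+1\}$ is generated with noise rates $e_{+1}:=\mathbb P(\tilde Y=-1\mid Y=+1)$, $e_{-1}:=\mathbb P(\tilde Y=+1\mid Y=-1)$, where $\tilde Y$ is conditionally independent of $X$ given $Y$; $\tilde{\mathcal D}$ is the distribution of $(X,\tilde Y)$. Let $\delta_p:=\mathbb P(Y=+1)-\mathbb P(Y=-1)$ and $\delta_{\tilde p}:=\mathbb P(\tilde Y=+1)-\mathbb P(\tilde Y=-1)$. The 0-1 loss is $\mathbb 1(a,b)=1$ if $a\neq b$ and $0$ otherwise. For a weight $\alpha$, $$\mathbb E_{\tilde{\mathcal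 D}}[\mathbb 1_{\alpha\text{-peer}}(f(X),\tilde Y)]:=\mathbb E[\mathbb 1(f(X),\tilde Y)]-\alpha\,\mathbb E[\mathbb 1(f(X_1),\tilde Y_2)],$$ where $(X,\tilde Y),(X_1,\tilde Y_1),(X_2,\tilde Y_2)$ are i.i.d. draws from $\tilde{\mathcal D}$. *)

theory Defs
  imports "HOL-Probability.Probability"
begin

text \<open>Labels are integers in {-1, +1}. The 0-1 loss.\<close>
definition zero_one :: "int \<Rightarrow> int \<Rightarrow> real" where
  "zero_one a b = (if a \<noteq> b then 1 else 0)"

definition noisy_distr ::
  "'w measure \<Rightarrow> ('w \<Rightarrow> real^'d) \<Rightarrow> ('w \<Rightarrow> int) \<Rightarrow> ((real^'d) \<times> int) measure" where
  "noisy_distr M X Yt = distr M (borel \<Otimes>\<^sub>M count_space UNIV) (\<lambda>w. (X w, Yt w))"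

text \<open>Expected alpha-peer 0-1 loss under the noisy distribution:
  E[1(f X, Yt)] - alpha * E[1(f X1, Yt2)] with (X1,Yt1),(X2,Yt2) i.i.d. copies.\<close>
definition peer_risk ::
  "'w measure \<Rightarrow> ('w \<Rightarrow> real^'d) \<Rightarrow> ('w \<Rightarrow> int) \<Rightarrow> real \<Rightarrow> (real^'d \<Rightarrow> int) \<Rightarrow> real" where
  "peer_risk M X Yt \<alpha> f =
     (\<integral>w. zero_one (f (X w)) (Yt w) \<partial>M)
     - \<alpha> * (\<integral>z. zero_one (f (fst (fst z))) (snd (snd z))
               \<partial>(noisy_distr M X Yt \<Otimes>\<^sub>M noisy_distr M X Yt))"

end

theory Submission
  imports Defs
begin


lemma msplit:
  assumes "finite_measure M" "{w\<in>space M. Q w} \<in> sets M" "{w\<in>space M. R w} \<in> sets M"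
    "\<forall>w\<in>space M. P w \<longleftrightarrow> Q w \<or> R w" "\<forall>w\<in>space M. \<not> (Q w \<and> R w)"
  shows "measure M {w\<in>space M. P w} = measure M {w\<in>space M. Q w} + measure M {w\<in>space M. R w}"
proof -
  interpret finite_measure M by fact
  have "{w\<in>space M. P w} = {w\<in>space M. Q w} \<union> {w\<in>space M. R w}" using assms(4) by auto
  moreover have "{w\<in>space M. Q w} \<inter> {w\<in>space M. R w} = {}" using assms(5) by auto
  ultimately show ?thesis using assms(2,3) finite_measure_Union by metis
qed

lemma int2:
  assumes "finite_measure M" "S \<in> sets M" "T \<in> sets M"
    "\<forall>w\<in>space M. g w = indicator S w + indicator T w"
  shows "integral\<^sup>L M g = measure M S + measure M T"
proof -
  interpret finite_measure M by fact
  have "integral\<^sup>L M g = integral\<^sup>L M (\<lambda>w. indicator S w + indicator T w :: real)"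
    using assms(4) by (intro Bochner_Integration.integral_cong) auto
  also have "\<dots> = integral\<^sup>L M (indicator S :: _ \<Rightarrow> real) + integral\<^sup>L M (indicator T)"
    using assms(2,3) by (intro Bochner_Integration.integral_add) (auto simp: integrable_indicator_iff sets.Int_space_eq2 less_top[symmetric])
  also have "\<dots> = measure M S + measure M T"
    using assms(2,3) by (simp add: sets.Int_space_eq2)
  finally show ?thesis .
qed

lemma key:
  fixes M :: "'w measure" and X :: "'w \<Rightarrow> real^'d" and Y Yt :: "'w \<Rightarrow> int" and f :: "real^'d \<Rightarrow> int"
  assumes "prob_space M"
    and [measurable]: "X \<in> borel_measurable M"
    and [measurable]: "Y \<in> measurable M (count_space UNIV)"
    and [measurable]: "Yt \<in> measurable M (count_space UNIV)"
    and Yv: "\<forall>w\<in>space M. Y w \<in> {-1, 1}"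
    and Ytv: "\<forall>w\<in>space M. Yt w \<in> {-1, 1}"
    and p0: "0 < measure M {w\<in>space M. Y w = 1}"
    and p1: "measure M {w\<in>space M. Y w = 1} < 1"
    and ci: "\<forall>A\<in>sets (borel :: (real^'d) measure). \<forall>y yt.
           measure M {w\<in>space M. X w \<in> A \<and> Y w = y \<and> Yt w = yt} * measure M {w\<in>space M. Y w = y}
         = measure M {w\<in>space M. X w \<in> A \<and> Y w = y} * measure M {w\<in>space M. Y w = y \<and> Yt w = yt}"
    and fm: "f \<in> borel_measurable borel" and fv: "\<forall>x. f x \<in> {-1, 1}"
  defines "PY \<equiv> \<lambda>y. measure M {w\<in>space M. Y w = y}"
    and "n \<equiv> \<lambda>y yt. measure M {w\<in>space M. Y w = y \<and> Yt w = yt}"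
    and "u \<equiv> measure M {w\<in>space M. X w \<in> f -` {1} \<and> Y w = 1}"
    and "v \<equiv> measure M {w\<in>space M. X w \<in> f -` {1} \<and> Y w = -1}"
  shows "(\<integral>w. zero_one (f (X w)) (Y w) \<partial>M) = v + PY 1 - u"
    "peer_risk M X Yt \<alpha> f = u * n 1 (-1) / PY 1 + v * n (-1) (-1) / PY (-1) + (PY 1 - u) * n 1 1 / PY 1
       + (PY (-1) - v) * n (-1) 1 / PY (-1)
       - \<alpha> * ((u + v) * (n 1 (-1) + n (-1) (-1)) + (1 - u - v) * (n 1 1 + n (-1) 1))"
    "PY 1 + PY (-1) = 1" "n 1 1 + n 1 (-1) = PY 1" "n (-1) 1 + n (-1) (-1) = PY (-1)"
    "measure M {w\<in>space M. Yt w = 1} = n 1 1 + n (-1) 1"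
    "measure M {w\<in>space M. Yt w = -1} = n 1 (-1) + n (-1) (-1)" "0 < PY (-1)"
proof -
  interpret prob_space M by fact
  have fin: "finite_measure M" by unfold_locales
  define A where "A = f -` {1}"
  define B where "B = f -` {-1}"
  have hA[measurable]: "A \<in> sets borel" and hB[measurable]: "B \<in> sets borel"
    using measurable_sets[OF fm, of "{1}"] measurable_sets[OF fm, of "{-1}"] unfolding A_def B_def by auto
  have AB: "x \<in> A \<or> x \<in> B" "\<not> (x \<in> A \<and> x \<in> B)" for x using fv[rule_format, of x] unfolding A_def B_def by auto
  define C where "C = (\<lambda>S y. measure M {w\<in>space M. X w \<in> S \<and> Y w = y})"
  define N where "N = (\<lambda>S y yt. measure M {w\<in>space M. X w \<in> S \<and> Y w = y \<and> Yt w = yt})"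
  have mX: "X -` S \<inter> space M \<in> sets M" if "S \<in> sets borel" for S
    using measurable_sets[OF assms(2) that] .
  have mY: "Y -` {y} \<inter> space M \<in> sets M" for y by (rule measurable_sets[OF assms(3)]) simp
  have mYt: "Yt -` {y} \<inter> space M \<in> sets M" for y by (rule measurable_sets[OF assms(4)]) simp
  have ms1: "{w\<in>space M. X w \<in> S \<and> Y w = y \<and> Yt w = yt} \<in> sets M"
    "{w\<in>space M. X w \<in> S \<and> Y w = y} \<in> sets M"
    "{w\<in>space M. X w \<in> S \<and> Yt w = yt} \<in> sets M"
    "{w\<in>space M. X w \<in> S} \<in> sets M"
    if "S \<in> sets borel" for S y yt
  proof -
    have "{w\<in>space M. X w \<in> S \<and> Y w = y \<and> Yt w = yt} = (X -` S \<inter> space M) \<inter> (Y -` {y} \<inter> space M) \<inter> (Yt -` {yt} \<inter> space M)"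
      "{w\<in>space M. X w \<in> S \<and> Y w = y} = (X -` S \<inter> space M) \<inter> (Y -` {y} \<inter> space M)"
      "{w\<in>space M. X w \<in> S \<and> Yt w = yt} = (X -` S \<inter> space M) \<inter> (Yt -` {yt} \<inter> space M)"
      "{w\<in>space M. X w \<in> S} = X -` S \<inter> space M" by auto
    then show "{w\<in>space M. X w \<in> S \<and> Y w = y \<and> Yt w = yt} \<in> sets M"
    "{w\<in>space M. X w \<in> S \<and> Y w = y} \<in> sets M"
    "{w\<in>space M. X w \<in> S \<and> Yt w = yt} \<in> sets M"
    "{w\<in>space M. X w \<in> S} \<in> sets M" using mX[OF that] mY mYt by (simp_all add: sets.Int)
  qed
  have ms2: "{w\<in>space M. Y w = y} \<in> sets M" "{w\<in>space M. Yt w = yt} \<in> sets M"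
    "{w\<in>space M. Y w = y \<and> Yt w = yt} \<in> sets M" for y yt
  proof -
    have "{w\<in>space M. Y w = y} = Y -` {y} \<inter> space M" "{w\<in>space M. Yt w = yt} = Yt -` {yt} \<inter> space M"
      "{w\<in>space M. Y w = y \<and> Yt w = yt} = (Y -` {y} \<inter> space M) \<inter> (Yt -` {yt} \<inter> space M)" by auto
    then show "{w\<in>space M. Y w = y} \<in> sets M" "{w\<in>space M. Yt w = yt} \<in> sets M"
    "{w\<in>space M. Y w = y \<and> Yt w = yt} \<in> sets M" using mY mYt by (simp_all add: sets.Int)
  qed
  have Y1: "PY 1 + PY (-1) = 1"
  proof -
    have "measure M {w\<in>space M. True} = PY 1 + PY (-1)" unfolding PY_def
      using Yv by (intro msplit[OF fin] ms2) auto
    moreover have "{w\<in>space M. True} = space M" by auto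
    ultimately show ?thesis using prob_space by simp
  qed
  have p0': "0 < PY 1" unfolding PY_def using p0 by simp
  have q0: "0 < PY (-1)" using Y1 p1 unfolding PY_def by linarith
  have nS: "n y 1 + n y (-1) = PY y" for y
    unfolding PY_def n_def using Ytv by (intro msplit[OF fin, symmetric] ms2) auto
  have CS: "C A y + C B y = PY y" for y
    unfolding PY_def C_def using AB by (intro msplit[OF fin, symmetric] ms1 hA hB) auto
  have NS: "C S y = N S y 1 + N S y (-1)" if "S \<in> sets borel" for S y
    unfolding N_def C_def using Ytv by (intro msplit[OF fin] ms1 that) auto
  have NC: "N S y yt = C S y * n y yt / PY y" if "S \<in> sets borel" "PY y > 0" for S y yt
  proof -
    have e: "N S y yt * PY y = C S y * n y yt" using ci that(1) unfolding N_def C_def n_def PY_def by blast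
    show ?thesis using e that(2) by (simp add: eq_divide_eq)
  qed
  have uC: "u = C A 1" "v = C A (-1)" unfolding u_def v_def C_def A_def by auto
  have clean: "(\<integral>w. zero_one (f (X w)) (Y w) \<partial>M) = C A (-1) + C B 1"
    unfolding C_def
  proof (rule int2[OF fin ms1(2) ms1(2)])
    show "\<forall>w\<in>space M. zero_one (f (X w)) (Y w) =
      indicator {w \<in> space M. X w \<in> A \<and> Y w = - 1} w + indicator {w \<in> space M. X w \<in> B \<and> Y w = 1} w"
      using Yv fv unfolding zero_one_def indicator_def A_def B_def by fastforce
  qed auto
  show "(\<integral>w. zero_one (f (X w)) (Y w) \<partial>M) = v + PY 1 - u"
    unfolding clean uC using CS[of 1] by linarith
  have noisy: "(\<integral>w. zero_one (f (X w)) (Yt w) \<partial>M) = 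
     measure M {w \<in> space M. X w \<in> A \<and> Yt w = - 1} + measure M {w \<in> space M. X w \<in> B \<and> Yt w = 1}"
  proof (rule int2[OF fin ms1(3) ms1(3)])
    show "\<forall>w\<in>space M. zero_one (f (X w)) (Yt w) =
      indicator {w \<in> space M. X w \<in> A \<and> Yt w = - 1} w + indicator {w \<in> space M. X w \<in> B \<and> Yt w = 1} w"
      using Ytv fv unfolding zero_one_def indicator_def A_def B_def by fastforce
  qed auto
  have XYt: "measure M {w \<in> space M. X w \<in> S \<and> Yt w = yt} = N S 1 yt + N S (-1) yt" if "S \<in> sets borel" for S yt
    unfolding N_def using Yv by (intro msplit[OF fin] ms1 that) auto
  have XS: "measure M {w \<in> space M. X w \<in> S} = C S 1 + C S (-1)" if "S \<in> sets borel" for S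
    unfolding C_def using Yv by (intro msplit[OF fin] ms1 that) auto
  have Yt: "measure M {w \<in> space M. Yt w = yt} = n 1 yt + n (-1) yt" for yt
    unfolding n_def using Yv by (intro msplit[OF fin] ms2) auto
  define D where "D = noisy_distr M X Yt"
  have Dm: "(\<lambda>w. (X w, Yt w)) \<in> measurable M (borel \<Otimes>\<^sub>M count_space UNIV)" by measurable
  interpret D: prob_space D unfolding D_def noisy_distr_def by (rule prob_space_distr[OF Dm])
  interpret DD: pair_prob_space D D by unfold_locales
  have sD: "sets D = sets (borel \<Otimes>\<^sub>M count_space UNIV)" unfolding D_def noisy_distr_def by simp
  have Dr: "measure D (S \<times> UNIV) = measure M {w \<in> space M. X w \<in> S}" if [measurable]: "S \<in> sets borel" for S
  proof -
    have "S \<times> UNIV \<in> sets (borel \<Otimes>\<^sub>M count_space UNIV)" by measurable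
    then show ?thesis unfolding D_def noisy_distr_def using measure_distr[OF Dm] by (auto intro: arg_cong[where f="measure M"])
  qed
  have Dl: "measure D (UNIV \<times> T) = measure M {w \<in> space M. Yt w \<in> T}" for T
  proof -
    have "(UNIV::(real^'d) set) \<times> T \<in> sets (borel \<Otimes>\<^sub>M count_space UNIV)" by measurable
    then show ?thesis unfolding D_def noisy_distr_def using measure_distr[OF Dm] by (auto intro: arg_cong[where f="measure M"])
  qed
  have DT: "measure (D \<Otimes>\<^sub>M D) (S \<times> T) = measure D S * measure D T" if "S \<in> sets D" "T \<in> sets D" for S T
    using D.emeasure_pair_measure_Times[OF that] unfolding measure_def by (simp add: enn2real_mult)
  have Ytn: "{w \<in> space M. Yt w \<in> - {1}} = {w \<in> space M. Yt w = -1}" "{w \<in> space M. Yt w \<in> - {-1}} = {w \<in> space M. Yt w = 1}"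
    using Ytv by auto
  have peer: "(\<integral>z. zero_one (f (fst (fst z))) (snd (snd z)) \<partial>(D \<Otimes>\<^sub>M D)) =
     measure M {w \<in> space M. X w \<in> A} * measure M {w \<in> space M. Yt w = -1}
     + measure M {w \<in> space M. X w \<in> B} * measure M {w \<in> space M. Yt w = 1}"
  proof -
    have s1: "(A \<times> UNIV) \<times> (UNIV \<times> - {1}) \<in> sets (D \<Otimes>\<^sub>M D)" "(B \<times> UNIV) \<times> (UNIV \<times> - {-1}) \<in> sets (D \<Otimes>\<^sub>M D)"
      unfolding sets_pair_measure_cong[OF sD sD] by measurable
    have "(\<integral>z. zero_one (f (fst (fst z))) (snd (snd z)) \<partial>(D \<Otimes>\<^sub>M D)) =
      measure (D \<Otimes>\<^sub>M D) ((A \<times> UNIV) \<times> (UNIV \<times> - {1})) + measure (D \<Otimes>\<^sub>M D) ((B \<times> UNIV) \<times> (UNIV \<times> - {-1}))"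
    proof (rule int2[OF _ s1])
      show "finite_measure (D \<Otimes>\<^sub>M D)" by unfold_locales
      show "\<forall>w\<in>space (D \<Otimes>\<^sub>M D). zero_one (f (fst (fst w))) (snd (snd w)) =
        indicator ((A \<times> UNIV) \<times> (UNIV \<times> - {1})) w + indicator ((B \<times> UNIV) \<times> (UNIV \<times> - {- 1})) w"
        using fv unfolding zero_one_def indicator_def A_def B_def by fastforce
    qed
    also have "\<dots> = measure D (A \<times> UNIV) * measure D (UNIV \<times> - {1}) + measure D (B \<times> UNIV) * measure D (UNIV \<times> - {-1})"
      unfolding sD by (subst DT; (unfold sD)?; measurable)+
    finally show ?thesis unfolding Dr[OF \<open>A \<in> sets borel\<close>] Dr[OF \<open>B \<in> sets borel\<close>] Dl Ytn .
  qed
  show "peer_risk M X Yt \<alpha> f = u * n 1 (-1) / PY 1 + v * n (-1) (-1) / PY (-1) + (PY 1 - u) * n 1 1 / PY 1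
       + (PY (-1) - v) * n (-1) 1 / PY (-1)
       - \<alpha> * ((u + v) * (n 1 (-1) + n (-1) (-1)) + (1 - u - v) * (n 1 1 + n (-1) 1))"
  proof -
    have b1: "C B 1 = PY 1 - u" "C B (-1) = PY (-1) - v" using CS[of 1] CS[of "-1"] uC by linarith+
    have xb: "measure M {w \<in> space M. X w \<in> B} = 1 - u - v" using XS[of B] b1 Y1 by simp
    have xa: "measure M {w \<in> space M. X w \<in> A} = u + v" using XS[of A] uC by simp
    show ?thesis
      unfolding peer_risk_def D_def[symmetric] peer noisy XYt[OF \<open>A \<in> sets borel\<close>] XYt[OF \<open>B \<in> sets borel\<close>]
        xa xb Yt NC[OF \<open>A \<in> sets borel\<close> p0'] NC[OF \<open>B \<in> sets borel\<close> p0']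
        NC[OF \<open>A \<in> sets borel\<close> q0] NC[OF \<open>B \<in> sets borel\<close> q0] b1 uC[symmetric]
      by (simp add: algebra_simps)
  qed
  show "PY 1 + PY (-1) = 1" "n 1 1 + n 1 (-1) = PY 1" "n (-1) 1 + n (-1) (-1) = PY (-1)"
    "measure M {w\<in>space M. Yt w = 1} = n 1 1 + n (-1) 1"
    "measure M {w\<in>space M. Yt w = -1} = n 1 (-1) + n (-1) (-1)" "0 < PY (-1)"
    using Y1 nS Yt q0 by auto
qed

lemma alg:
  fixes p q n11 n1m nm1 nmm u v u' v' ep em dp dpt \<alpha> :: real
  assumes "p > 0" "q > 0" "p + q = 1" "n11 + n1m = p" "nm1 + nmm = q"
    "ep = n1m / p" "em = nm1 / q" "dp = p - q" "dpt = (n11 + nm1) - (n1m + nmm)" "dpt \<noteq> 0"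
    "\<alpha> = 1 - (1 - em - ep) * (dp / dpt)"
  shows "(u * n1m / p + v * nmm / q + (p - u) * n11 / p + (q - v) * nm1 / q
            - \<alpha> * ((u + v) * (n1m + nmm) + (1 - u - v) * (n11 + nm1)))
       - (u' * n1m / p + v' * nmm / q + (p - u') * n11 / p + (q - v') * nm1 / q
            - \<alpha> * ((u' + v') * (n1m + nmm) + (1 - u' - v') * (n11 + nm1)))
       = 1 * (1 - em - ep) * ((v + p - u) - (v' + p - u'))"
proof -
  have a: "\<alpha> * dpt = dpt - (1 - em - ep) * dp" using assms(10,11) by (simp add: field_simps)
  have n1: "n1m = ep * p" "nm1 = em * q" using assms(1,2,6,7) by auto
  have e: "n11 = p - ep * p" "nmm = q - em * q" using assms(4,5) n1 by linarith+
  have d: "n1m / p = ep" "nmm / q = 1 - em" "n11 / p = 1 - ep" "nm1 / q = em"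
    using assms(1,2) unfolding n1 e by (auto simp: field_simps)
  have s: "n1m + nmm = 1 - (n11 + nm1)" using assms(3,4,5) by linarith
  have "(u * n1m / p + v * nmm / q + (p - u) * n11 / p + (q - v) * nm1 / q
            - \<alpha> * ((u + v) * (n1m + nmm) + (1 - u - v) * (n11 + nm1)))
       - (u' * n1m / p + v' * nmm / q + (p - u') * n11 / p + (q - v') * nm1 / q
            - \<alpha> * ((u' + v') * (n1m + nmm) + (1 - u' - v') * (n11 + nm1)))
     = (u - u') * (2 * ep - 1) + (v - v') * (1 - 2 * em) + (u - u' + v - v') * (\<alpha> * dpt)"
    unfolding times_divide_eq_right[symmetric] d s assms(9) by (simp add: algebra_simps)
  also have "\<dots> = 1 * (1 - em - ep) * ((v + p - u) - (v' + p - u'))"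
  proof -
    have q: "q = 1 - p" using assms(3) by linarith
    have dp: "dp = 2 * p - 1" using assms(8) q by linarith
    have dpt: "dpt = 2 * p - 2 * ep * p + 2 * em * (1 - p) - 1" using assms(9) unfolding n1 e q by (simp add: algebra_simps)
    show ?thesis unfolding a unfolding dp dpt by (simp add: algebra_simps)
  qed
  finally show ?thesis .
qed
theorem proposition1:
  fixes M :: "'w measure" and X :: "'w \<Rightarrow> real^'d" and Y Yt :: "'w \<Rightarrow> int"
  assumes "prob_space M"
    and "X \<in> borel_measurable M"
    and "Y \<in> measurable M (count_space UNIV)"
    and "Yt \<in> measurable M (count_space UNIV)"
    and "\<forall>w\<in>space M. Y w \<in> {-1, 1}"
    and "\<forall>w\<in>space M. Yt w \<in> {-1, 1}"
    and "0 < measure M {w\<in>space M. Y w = 1}"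
    and "measure M {w\<in>space M. Y w = 1} < 1"
    \<comment> \<open>noisy label conditionally independent of X given Y\<close>
    and "\<forall>A\<in>sets (borel :: (real^'d) measure). \<forall>y yt.
           measure M {w\<in>space M. X w \<in> A \<and> Y w = y \<and> Yt w = yt} * measure M {w\<in>space M. Y w = y}
         = measure M {w\<in>space M. X w \<in> A \<and> Y w = y} * measure M {w\<in>space M. Y w = y \<and> Yt w = yt}"
    and "ep = measure M {w\<in>space M. Y w = 1 \<and> Yt w = -1} / measure M {w\<in>space M. Y w = 1}"
    and "em = measure M {w\<in>space M. Y w = -1 \<and> Yt w = 1} / measure M {w\<in>space M. Y w = -1}"
    and "dp = measure M {w\<in>space M. Y w = 1} - measure M {w\<in>space M. Y w = -1}"
    and "dpt = measure M {w\<in>space M. Yt w = 1} - measure M {w\<in>space M. Yt w = -1}"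
    and "em + ep < 1"
    and "dpt \<noteq> 0"
    and "\<alpha> = 1 - (1 - em - ep) * (dp / dpt)"
  shows "\<exists>c>0. \<forall>f f' :: real^'d \<Rightarrow> int.
           f \<in> borel_measurable borel \<longrightarrow> f' \<in> borel_measurable borel \<longrightarrow>
           (\<forall>x. f x \<in> {-1, 1}) \<longrightarrow> (\<forall>x. f' x \<in> {-1, 1}) \<longrightarrow>
           peer_risk M X Yt \<alpha> f - peer_risk M X Yt \<alpha> f'
           = c * (1 - em - ep) *
             ((\<integral>w. zero_one (f (X w)) (Y w) \<partial>M) - (\<integral>w. zero_one (f' (X w)) (Y w) \<partial>M))"
proof (intro exI[of _ 1] conjI allI impI)
  show "(0::real) < 1" by simp
  fix f f' :: "real^'d \<Rightarrow> int"
  assume fm: "f \<in> borel_measurable borel" and fm': "f' \<in> borel_measurable borel"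
    and fv: "\<forall>x. f x \<in> {-1, 1}" and fv': "\<forall>x. f' x \<in> {-1, 1}"
  note k = key[OF assms(1-9) fm fv]
  note k' = key[OF assms(1-9) fm' fv']
  show "peer_risk M X Yt \<alpha> f - peer_risk M X Yt \<alpha> f'
           = 1 * (1 - em - ep) *
             ((\<integral>w. zero_one (f (X w)) (Y w) \<partial>M) - (\<integral>w. zero_one (f' (X w)) (Y w) \<partial>M))"
    unfolding k(1,2) k'(1,2)
  proof (rule alg)
    show "0 < measure M {w\<in>space M. Y w = 1}" by fact
  qed (use k assms(10-16) in auto)
qed

end
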